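(* Let $\mathcal{L}$ be a closed chain of $n \ge 7$ revolute joints with screw axes $\bm{\xi}_1,\dots,\bm{\xi}_n$ (in the cyclic order of the chain). Suppose there is a line $\ell$ such that every axis $\bm{\xi}_i$ intersects $\ell$, at points $p_1,\dots,p_n$ respectively, and these points occur along $\ell$ in monotone order, i.e. $p_1, p_2, \dots, p_n$ appear consecutively in this order along $\ell$ (in one of its two directions). Then $\mathcal{L}$ is hypo-paradoxical.
   Context: For a revolute joint with unit axis direction $\bm{\omega}_i$ through point $\bm{q}_i$, the screw is $\bm{\xi}_i = (\bm{\omega}_i, \bm{q}_i\times\bm{\omega}_i)$ with twist matrix $\hat{\bm{\xi}}_i = \begin{bmatrix} [\bm{\omega}_i]_\times & \bm{q}_i \times \bm{\omega}_i \\ 0 & 0\end{bmatrix}$. The configuration space of the closed chain is $\mathcal{C}(\mathcal{L}) = \{(\theta_1,\dots,\theta_n) : \prod_{i=1}^n e^{\hat{\bm{\xi}}_i\theta_i} = I_4\}$ near $\theta=0$ (it depends only on the screw axes). The Chebyshev–Grübler–Kutzbach mobility of a closed chain with $n$ links and $n$ revolute joints is $M = n-6$. A closed chain is hypo-paradoxical if $M > 0$ but $\dim\mathcal{C}(\mathcal{L}) = 0$, i.e. it admits no nontrivial continuous motion. *)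

theory Defs
  imports "HOL-Analysis.Analysis" "HOL-Analysis.Cross3"
begin

definition idx3 :: "4 \<Rightarrow> 3" where
  "idx3 i = (if i = 1 then 1 else if i = 2 then 2 else 3)"

text \<open>Twist matrix of the screw (w, q cross w) of a revolute joint with axis direction w
  through the point q:  [[ [w]_x , q cross w ], [0, 0]].  Row/column 4 is the homogeneous one.
  Column j (j = 1,2,3) of [w]_x is  w cross e_j.\<close>
definition twist :: "real^3 \<Rightarrow> real^3 \<Rightarrow> real^4^4" where
  "twist w q = (\<chi> i j. if i = 4 then 0
                        else if j = 4 then (cross3 q w) $ idx3 i
                        else (cross3 w (axis (idx3 j) 1)) $ idx3 i)"

primrec mpow :: "real^'n^'n \<Rightarrow> nat \<Rightarrow> real^'n^'n" where
  "mpow A 0 = mat 1"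
| "mpow A (Suc k) = mpow A k ** A"

definition mexp :: "real^'n^'n \<Rightarrow> real^'n^'n" where
  "mexp A = (\<Sum>k. (1 / fact k) *\<^sub>R mpow A k)"

primrec chain_prod :: "(nat \<Rightarrow> real^'n^'n) \<Rightarrow> nat \<Rightarrow> real^'n^'n" where
  "chain_prod F 0 = mat 1"
| "chain_prod F (Suc k) = chain_prod F k ** F (Suc k)"

text \<open>Loop closure:  prod_{i=1}^n exp(xi_i theta_i) = I_4.  A closed chain with n joints
  is given by axis directions w i and points q i, i = 1..n.\<close>
definition loop_closes :: "nat \<Rightarrow> (nat \<Rightarrow> real^3) \<Rightarrow> (nat \<Rightarrow> real^3) \<Rightarrow> (nat \<Rightarrow> real) \<Rightarrow> bool" where
  "loop_closes n w q \<theta> \<longleftrightarrow>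
     chain_prod (\<lambda>i. mexp (\<theta> i *\<^sub>R twist (w i) (q i))) n = mat 1"

text \<open>Configuration space C(L) (joint angles outside 1..n are irrelevant and fixed to 0).\<close>
definition config_space :: "nat \<Rightarrow> (nat \<Rightarrow> real^3) \<Rightarrow> (nat \<Rightarrow> real^3) \<Rightarrow> (nat \<Rightarrow> real) set" where
  "config_space n w q = {\<theta>. (\<forall>i. i \<notin> {1..n} \<longrightarrow> \<theta> i = 0) \<and> loop_closes n w q \<theta>}"

text \<open>dim C(L) = 0 near theta = 0: theta = 0 is an isolated point of C(L).\<close>
definition config_dim_zero_at_0 :: "nat \<Rightarrow> (nat \<Rightarrow> real^3) \<Rightarrow> (nat \<Rightarrow> real^3) \<Rightarrow> bool" where
  "config_dim_zero_at_0 n w q \<longleftrightarrow>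
     (\<exists>\<epsilon>>0. \<forall>\<theta>\<in>config_space n w q. (\<forall>i\<in>{1..n}. \<bar>\<theta> i\<bar> < \<epsilon>) \<longrightarrow> (\<forall>i. \<theta> i = 0))"

definition cgk_mobility :: "nat \<Rightarrow> int" where
  "cgk_mobility n = int n - 6"

definition hypo_paradoxical :: "nat \<Rightarrow> (nat \<Rightarrow> real^3) \<Rightarrow> (nat \<Rightarrow> real^3) \<Rightarrow> bool" where
  "hypo_paradoxical n w q \<longleftrightarrow> cgk_mobility n > 0 \<and> config_dim_zero_at_0 n w q"

definition line_through :: "real^3 \<Rightarrow> real^3 \<Rightarrow> (real^3) set" where
  "line_through p d = {p + s *\<^sub>R d | s. True}"

end

theory Submission
  imports Defs
begin

definition hom :: "real^3 \<Rightarrow> real^4" where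
  "hom x = (\<chi> i. if i = 4 then 1 else x $ idx3 i)"
definition hom0 :: "real^3 \<Rightarrow> real^4" where
  "hom0 x = (\<chi> i. if i = 4 then 0 else x $ idx3 i)"

lemma idx3_simps [simp]: "idx3 1 = 1" "idx3 2 = 2" "idx3 3 = 3"
  by (simp_all add: idx3_def)

lemma twist_hom: "twist w q *v hom x = hom0 (cross3 w (x - q))"
  by (simp add: vec_eq_iff forall_4 sum_4 twist_def hom_def hom0_def matrix_vector_mult_def
     cross3_simps axis_def)

lemma twist_hom0: "twist w q *v hom0 x = hom0 (cross3 w x)"
  by (simp add: vec_eq_iff forall_4 sum_4 twist_def hom_def hom0_def matrix_vector_mult_def
     cross3_simps axis_def)

lemma decomp4: "v = hom0 (vector [v$1, v$2, v$3]) + (v$4) *\<^sub>R hom 0"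
  by (simp add: vec_eq_iff forall_4 hom_def hom0_def)

lemma hom0_add: "hom0 x + hom0 y = hom0 (x + y)"
  by (simp add: vec_eq_iff forall_4 hom0_def)
lemma hom0_scale: "c *\<^sub>R hom0 x = hom0 (c *\<^sub>R x)"
  by (simp add: vec_eq_iff forall_4 hom0_def)
lemma hom_add0: "hom x + hom0 y = hom (x + y)"
  by (simp add: vec_eq_iff forall_4 hom0_def hom_def)
lemma hom0_neg: "- hom0 x = hom0 (- x)"
  by (simp add: vec_eq_iff forall_4 hom0_def)
lemma hom_inj: "hom x = hom y \<Longrightarrow> x = y"
  by (simp add: vec_eq_iff forall_4 hom_def forall_3)

lemma cross_cross: "cross3 w (cross3 w u) = (w \<bullet> u) *\<^sub>R w - (w \<bullet> w) *\<^sub>R u"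
  by (simp add: cross3_simps forall_3)

lemma cross_cross_cross:
  assumes "norm w = 1"
  shows "cross3 w (cross3 w (cross3 w u)) = - cross3 w u"
proof -
  have "w \<bullet> w = 1" using assms by (simp add: dot_square_norm) 
  then show ?thesis
    by (simp add: cross_cross, simp add: cross3_simps)
qed

lemma cross_cross_perp:
  assumes "norm w = 1" "w \<bullet> u = 0"
  shows "cross3 w (cross3 w u) = - u"
proof -
  have "w \<bullet> w = 1" using assms by (simp add: dot_square_norm)
  then show ?thesis using assms by (simp add: cross_cross)
qed

lemma mv_neg: "(- A) *v (v::real^'n) = - (A *v v)"
  by (simp add: matrix_vector_mult_def vec_eq_iff sum_negf)

lemma twist_cube:
  assumes "norm w = 1"
  shows "twist w q ** twist w q ** twist w q = - twist w q"
proof -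
  let ?X = "twist w q"
  have h0: "?X *v hom 0 = hom0 (cross3 q w)"
    using twist_hom[of w q 0] by (simp add: cross_skew[of w q])
  have "(?X ** ?X ** ?X) *v v = (- ?X) *v v" for v
  proof -
    obtain u c where v: "v = hom0 u + c *\<^sub>R hom 0" using decomp4[of v] by blast
    have a: "?X *v v = hom0 (cross3 w u + c *\<^sub>R cross3 q w)"
      unfolding v matrix_vector_right_distrib matrix_vector_mult_scaleR twist_hom0 h0
        hom0_scale hom0_add ..
    have "(?X ** ?X ** ?X) *v v = ?X *v (?X *v (?X *v v))"
      by (simp only: matrix_vector_mul_assoc matrix_mul_assoc)
    also have "\<dots> = hom0 (- (cross3 w u + c *\<^sub>R cross3 q w))"
    proof -
      have "w \<bullet> (cross3 w u + c *\<^sub>R cross3 q w) = 0"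
        by (simp add: inner_add_right dot_cross_self)
      then have e: "cross3 w (cross3 w (cross3 w u + c *\<^sub>R cross3 q w)) = - (cross3 w u + c *\<^sub>R cross3 q w)"
        by (rule cross_cross_perp[OF assms])
      show ?thesis unfolding a twist_hom0 e ..
    qed
    also have "\<dots> = (- ?X) *v v"
      unfolding mv_neg a hom0_neg ..
    finally show ?thesis .
  qed
  then show ?thesis using matrix_eq by blast
qed


lemma mat_scale_right: "A ** (k *\<^sub>R B) = k *\<^sub>R (A ** (B::real^'n^'n))"
  by (simp add: matrix_matrix_mult_def vec_eq_iff sum_distrib_left mult_ac)
lemma mat_scale_left: "(k *\<^sub>R A) ** B = k *\<^sub>R (A ** (B::real^'n^'n))"
  by (simp add: matrix_matrix_mult_def vec_eq_iff sum_distrib_left mult_ac)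

lemma mpow_scale: "mpow (c *\<^sub>R A) k = (c ^ k) *\<^sub>R mpow A k"
  by (induction k) (simp_all add: mat_scale_right mat_scale_left)

lemma mat_mul_neg: "A ** (- B) = - (A ** (B :: real^'n^'n))"
  by (simp add: matrix_matrix_mult_def vec_eq_iff sum_negf)

lemma mpow_cube:
  assumes "X ** X ** X = - X"
  shows "mpow X (Suc (Suc (Suc k))) = - mpow X (Suc k)"
proof -
  have "mpow X (Suc (Suc (Suc k))) = mpow X k ** (X ** X ** X)"
    by (simp add: matrix_mul_assoc)
  then show ?thesis using assms by (simp add: mat_mul_neg)
qed

lemma mpow_odd:
  assumes "X ** X ** X = - X"
  shows "mpow X (2*m+1) = ((-1)^m) *\<^sub>R X"
proof (induction m)
  case 0 then show ?case by simp
next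
  case (Suc m)
  have e1: "2*Suc m+1 = Suc (Suc (Suc (2*m)))" "2*m+1 = Suc (2*m)" by simp_all
  have "mpow X (2*Suc m+1) = - mpow X (2*m+1)" unfolding e1 by (rule mpow_cube[OF assms])
  then show ?case using Suc by (simp del: mpow.simps)
qed

lemma mpow_even:
  assumes "X ** X ** X = - X"
  shows "mpow X (2*m+2) = ((-1)^m) *\<^sub>R (X ** X)"
proof (induction m)
  case 0 then show ?case by (simp add: numeral_2_eq_2)
next
  case (Suc m)
  have e1: "2*Suc m+2 = Suc (Suc (Suc (Suc (2*m))))" "2*m+2 = Suc (Suc (2*m))" by simp_all
  have "mpow X (2*Suc m+2) = - mpow X (2*m+2)" unfolding e1 by (rule mpow_cube[OF assms])
  then show ?case using Suc by (simp del: mpow.simps)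
qed

lemma mexp_term:
  assumes "X ** X ** X = - X"
  shows "(1 / fact k) *\<^sub>R mpow (\<theta> *\<^sub>R X) k =
     (if k = 0 then 1 else 0) *\<^sub>R mat 1 + (sin_coeff k * \<theta>^k) *\<^sub>R X
     + ((if k = 0 then 1 else 0) - cos_coeff k * \<theta>^k) *\<^sub>R (X ** X)"
proof (cases "k = 0")
  case True
  have "(1 / fact k) *\<^sub>R mpow (\<theta> *\<^sub>R X) k = mat 1"
    using True by (simp only: fact_0 mpow.simps(1) div_by_1 scaleR_one)
  moreover have "(if k = 0 then 1 else 0) *\<^sub>R mat 1 + (sin_coeff k * \<theta>^k) *\<^sub>R X
     + ((if k = 0 then 1 else 0) - cos_coeff k * \<theta>^k) *\<^sub>R (X ** X) = mat 1"
    using True by (simp only: simp_thms if_True sin_coeff_0 cos_coeff_0 power_0 mult_1_right mult_zero_left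
       scaleR_zero_left scaleR_one add_0_right diff_self)
  ultimately show ?thesis by (simp only:)
next
  case False
  show ?thesis
  proof (cases "even k")
    case True
    then obtain j where j: "k = 2*j" by (rule evenE)
    have "j \<noteq> 0" using False j by simp
    then obtain m where "j = Suc m" using not0_implies_Suc by blast
    with j have k: "k = 2*m+2" by simp
    have mp: "mpow X k = ((-1)^m) *\<^sub>R (X ** X)" unfolding k by (rule mpow_even[OF assms])
    have sc: "sin_coeff k = 0" using True by (simp add: sin_coeff_def)
    have cc: "cos_coeff k = - ((-1)^m / fact k)"
    proof -
      have "k div 2 = Suc m" using k by simp
      then show ?thesis using True by (simp add: cos_coeff_def)
    qed
    have e: "(1 / fact k) * (\<theta> ^ k * (-1)^m) = 0 - - ((-1)^m / fact k) * \<theta>^k" by simp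
    show ?thesis unfolding mpow_scale mp sc cc scaleR_scaleR e
      by (simp only: False if_False scaleR_zero_left mult_zero_left add_0_left)
  next
    case odd: False
    from odd obtain m where k: "k = 2*m+1" by (rule oddE)
    have mp: "mpow X k = ((-1)^m) *\<^sub>R X" unfolding k by (rule mpow_odd[OF assms])
    have cc: "cos_coeff k = 0" using odd by (simp add: cos_coeff_def)
    have sc: "sin_coeff k = (-1)^m / fact k"
    proof -
      have "(k - Suc 0) div 2 = m" using k by simp
      then show ?thesis using odd by (simp add: sin_coeff_def)
    qed
    have e: "(1 / fact k) * (\<theta> ^ k * (-1)^m) = (-1)^m / fact k * \<theta>^k" by simp
    show ?thesis unfolding mpow_scale mp sc cc scaleR_scaleR e
      by (simp only: False if_False scaleR_zero_left mult_zero_left add_0_left diff_zero add_0_right)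
  qed
qed

lemma mexp_closed:
  assumes "X ** X ** X = - X"
  shows "mexp (\<theta> *\<^sub>R X) = mat 1 + sin \<theta> *\<^sub>R X + (1 - cos \<theta>) *\<^sub>R (X ** X)"
proof -
  have s1: "(\<lambda>k. (if k = 0 then 1 else 0::real)) sums 1"
    using sums_single[of 0 "\<lambda>_. 1::real"] by (simp only: simp_thms)
  have s2: "(\<lambda>k. sin_coeff k * \<theta>^k) sums sin \<theta>" using sin_converges[of \<theta>] by (simp only: real_scaleR_def)
  have s3: "(\<lambda>k. cos_coeff k * \<theta>^k) sums cos \<theta>" using cos_converges[of \<theta>] by (simp only: real_scaleR_def)
  have t1: "(\<lambda>k. (if k = 0 then 1 else 0) *\<^sub>R mat 1) sums (1 *\<^sub>R (mat 1::real^'n^'n))"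
    by (rule sums_scaleR_left[OF s1])
  have t2: "(\<lambda>k. (sin_coeff k * \<theta>^k) *\<^sub>R X) sums (sin \<theta> *\<^sub>R X)"
    by (rule sums_scaleR_left[OF s2])
  have t3: "(\<lambda>k. ((if k = 0 then 1 else 0) - cos_coeff k * \<theta>^k) *\<^sub>R (X ** X)) sums ((1 - cos \<theta>) *\<^sub>R (X ** X))"
    by (rule sums_scaleR_left[OF sums_diff[OF s1 s3]])
  have "(\<lambda>k. (if k = 0 then 1 else 0) *\<^sub>R mat 1 + (sin_coeff k * \<theta>^k) *\<^sub>R X
     + ((if k = 0 then 1 else 0) - cos_coeff k * \<theta>^k) *\<^sub>R (X ** X))
     sums (1 *\<^sub>R mat 1 + sin \<theta> *\<^sub>R X + (1 - cos \<theta>) *\<^sub>R (X ** X))"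
    by (rule sums_add[OF sums_add[OF t1 t2] t3])
  then have "(\<lambda>k. (1 / fact k) *\<^sub>R mpow (\<theta> *\<^sub>R X) k)
     sums (mat 1 + sin \<theta> *\<^sub>R X + (1 - cos \<theta>) *\<^sub>R (X ** X))"
    by (simp only: mexp_term[OF assms] scaleR_one)
  then show ?thesis unfolding mexp_def by (rule sums_unique[symmetric])
qed

definition rot :: "real^3 \<Rightarrow> real^3 \<Rightarrow> real \<Rightarrow> real^3 \<Rightarrow> real^3" where
  "rot w q \<theta> x = x + sin \<theta> *\<^sub>R cross3 w (x - q) + (1 - cos \<theta>) *\<^sub>R cross3 w (cross3 w (x - q))"

lemma mexp_hom:
  assumes "norm w = 1"
  shows "mexp (\<theta> *\<^sub>R twist w q) *v hom x = hom (rot w q \<theta> x)"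
proof -
  have "mexp (\<theta> *\<^sub>R twist w q) *v hom x =
     hom x + sin \<theta> *\<^sub>R (twist w q *v hom x) + (1 - cos \<theta>) *\<^sub>R (twist w q *v (twist w q *v hom x))"
    unfolding mexp_closed[OF twist_cube[OF assms]]
    unfolding matrix_vector_mult_add_rdistrib scaleR_matrix_vector_assoc[symmetric]
       matrix_vector_mul_assoc matrix_vector_mul_lid ..
  also have "\<dots> = hom (rot w q \<theta> x)"
    unfolding twist_hom twist_hom0 rot_def hom0_scale hom_add0 add.assoc[symmetric] ..
  finally show ?thesis .
qed


definition rotv :: "real^3 \<Rightarrow> real \<Rightarrow> real^3 \<Rightarrow> real^3" where
  "rotv w \<theta> v = v + sin \<theta> *\<^sub>R cross3 w v + (1 - cos \<theta>) *\<^sub>R cross3 w (cross3 w v)"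

lemma rot_rotv: "rot w q \<theta> x - rot w q \<theta> y = rotv w \<theta> (x - y)"
  unfolding rot_def rotv_def by (simp add: cross3_simps)

lemma norm_rotv:
  assumes "norm w = 1"
  shows "norm (rotv w \<theta> v) = norm v"
proof -
  define s where "s = sin \<theta>"
  define c where "c = cos \<theta>"
  define u where "u = cross3 w v"
  define z where "z = cross3 w u"
  have ww: "w \<bullet> w = 1" using assms by (simp add: dot_square_norm)
  have zdef: "z = (w \<bullet> v) *\<^sub>R w - v" unfolding z_def u_def cross_cross ww by simp
  have sc: "s^2 + c^2 = 1" unfolding s_def c_def by simp
  have uu: "u \<bullet> u = v \<bullet> v - (w \<bullet> v)^2"
    using norm_cross_dot[of w v] assms unfolding u_def by (simp add: dot_square_norm)
  have vu: "v \<bullet> u = 0" "u \<bullet> v = 0" unfolding u_def by (simp_all add: dot_cross_self)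
  have uz: "u \<bullet> z = 0" "z \<bullet> u = 0" unfolding z_def by (simp_all add: dot_cross_self)
  have vz: "v \<bullet> z = (w \<bullet> v)^2 - v \<bullet> v" "z \<bullet> v = (w \<bullet> v)^2 - v \<bullet> v"
    unfolding zdef by (simp_all add: inner_diff_left inner_diff_right power2_eq_square inner_commute)
  have zz: "z \<bullet> z = v \<bullet> v - (w \<bullet> v)^2"
    unfolding zdef by (simp add: inner_diff_left inner_diff_right power2_eq_square inner_commute ww)
  have "rotv w \<theta> v \<bullet> rotv w \<theta> v = (v + s *\<^sub>R u + (1 - c) *\<^sub>R z) \<bullet> (v + s *\<^sub>R u + (1 - c) *\<^sub>R z)"
    unfolding rotv_def s_def c_def u_def z_def ..
  also have "\<dots> = v \<bullet> v + s^2 * (u \<bullet> u) + (1-c)^2 * (z \<bullet> z) + 2 * (1 - c) * (v \<bullet> z)"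
    by (simp add: inner_add_left inner_add_right vu uz power2_eq_square inner_commute algebra_simps)
  also have "\<dots> = v \<bullet> v + (v \<bullet> v - (w \<bullet> v)^2) * (s^2 + c^2 - 1)"
    unfolding uu zz vz by (simp add: algebra_simps power2_eq_square)
  also have "\<dots> = v \<bullet> v" using sc by simp
  finally show ?thesis by (simp add: norm_eq_sqrt_inner)
qed

lemma dist_rot:
  assumes "norm w = 1"
  shows "dist (rot w q \<theta> x) (rot w q \<theta> y) = dist x y"
  unfolding dist_norm rot_rotv norm_rotv[OF assms] ..

lemma rot_fix_axis: "cross3 w (x - q) = 0 \<Longrightarrow> rot w q \<theta> x = x"
  unfolding rot_def by simp

lemma rot_zero: "rot w q 0 x = x"
  unfolding rot_def by simp

lemma rot_fix_off_axis:
  assumes "rot w q \<theta> x = x" "cross3 w (x - q) \<noteq> 0" "\<bar>\<theta>\<bar> < 1"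
  shows "\<theta> = 0"
proof -
  define u where "u = cross3 w (x - q)"
  have "sin \<theta> *\<^sub>R u + (1 - cos \<theta>) *\<^sub>R cross3 w u = 0"
    using assms(1) unfolding rot_def u_def by (simp add: algebra_simps)
  then have "u \<bullet> (sin \<theta> *\<^sub>R u + (1 - cos \<theta>) *\<^sub>R cross3 w u) = 0" by simp
  then have "sin \<theta> * (u \<bullet> u) = 0" by (simp add: inner_add_right dot_cross_self)
  moreover have "u \<bullet> u \<noteq> 0" using assms(2) unfolding u_def by simp
  ultimately have s0: "sin \<theta> = 0" by simp
  have pi1: "1 < pi" using pi_gt3 by simp
  show ?thesis
  proof (rule ccontr)
    assume "\<theta> \<noteq> 0"
    then consider "0 < \<theta>" | "0 < - \<theta>" by linarith
    then show False
    proof cases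
      case 1 then have "0 < sin \<theta>" using assms(3) pi1 by (intro sin_gt_zero) auto
      then show False using s0 by simp
    next
      case 2 then have "0 < sin (- \<theta>)" using assms(3) pi1 by (intro sin_gt_zero) auto
      then show False using s0 by simp
    qed
  qed
qed


fun compR :: "(nat \<Rightarrow> 'a \<Rightarrow> 'a) \<Rightarrow> nat \<Rightarrow> nat \<Rightarrow> 'a \<Rightarrow> 'a" where
  "compR f i 0 x = x"
| "compR f i (Suc m) x = f i (compR f (Suc i) m x)"

lemma compR_snoc: "compR f i (Suc m) x = compR f i m (f (i + m) x)"
  by (induction m arbitrary: i) simp_all

lemma compR_id: "(\<And>j y. i \<le> j \<Longrightarrow> j < i + m \<Longrightarrow> f j y = y) \<Longrightarrow> compR f i m x = x"
  by (induction m arbitrary: i) simp_all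

lemma chain_act:
  assumes "\<And>i x. i \<in> {1..k} \<Longrightarrow> F i *v hom x = hom (g i x)"
  shows "chain_prod F k *v hom x = hom (compR g 1 k x)"
  using assms
proof (induction k arbitrary: x)
  case 0 then show ?case by simp
next
  case (Suc k)
  have "chain_prod F (Suc k) *v hom x = chain_prod F k *v (F (Suc k) *v hom x)"
    by (simp add: matrix_vector_mul_assoc)
  also have "\<dots> = chain_prod F k *v hom (g (Suc k) x)" using Suc.prems[of "Suc k"] by simp
  also have "\<dots> = hom (compR g 1 k (g (Suc k) x))" using Suc by simp
  also have "\<dots> = hom (compR g 1 (Suc k) x)" by (simp only: compR_snoc) simp
  finally show ?case .
qed


lemma main_inc:
  fixes n :: nat and w q :: "nat \<Rightarrow> real^3" and a d :: "real^3" and t \<theta> :: "nat \<Rightarrow> real"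
  assumes n2: "n \<ge> 2"
    and unit: "\<forall>i\<in>{1..n}. norm (w i) = 1"
    and dnz: "d \<noteq> 0"
    and meets: "\<forall>i\<in>{1..n}. line_through (q i) (w i) \<inter> line_through a d = {a + t i *\<^sub>R d}"
    and inc: "\<forall>i\<in>{1..n}. \<forall>j\<in>{1..n}. i < j \<longrightarrow> t i < t j"
    and th: "\<theta> \<in> config_space n w q"
    and small: "\<forall>i\<in>{1..n}. \<bar>\<theta> i\<bar> < 1"
  shows "\<forall>i. \<theta> i = 0"
proof -
  define f where "f i = rot (w i) (q i) (\<theta> i)" for i
  define p where "p i = a + t i *\<^sub>R d" for i
  have closes: "compR f 1 n x = x" for x
  proof -
    have lc: "chain_prod (\<lambda>i. mexp (\<theta> i *\<^sub>R twist (w i) (q i))) n = mat 1"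
      using th by (simp add: config_space_def loop_closes_def)
    have "chain_prod (\<lambda>i. mexp (\<theta> i *\<^sub>R twist (w i) (q i))) n *v hom x = hom (compR f 1 n x)"
      by (rule chain_act) (simp add: f_def mexp_hom unit)
    then have "hom x = hom (compR f 1 n x)" unfolding lc by simp
    then show ?thesis using hom_inj by metis
  qed
  have onaxis: "cross3 (w i) (p i - q i) = 0" if "i \<in> {1..n}" for i
  proof -
    have "p i \<in> line_through (q i) (w i)" using meets that unfolding p_def by blast
    then obtain r where "p i = q i + r *\<^sub>R w i" unfolding line_through_def by blast
    then have "p i - q i = r *\<^sub>R w i" by simp
    then show ?thesis by (simp add: cross_mult_right)
  qed
  have tinj: "t i \<noteq> t j" if "i \<in> {1..n}" "j \<in> {1..n}" "i \<noteq> j" for i j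
    using inc that by (metis less_irrefl linorder_neqE_nat)
  have offaxis: "cross3 (w i) (p j - q i) \<noteq> 0" if ij: "i \<in> {1..n}" "j \<in> {1..n}" "i \<noteq> j" for i j
  proof
    assume c0: "cross3 (w i) (p j - q i) = 0"
    have ww: "w i \<bullet> w i = 1" using unit ij by (simp add: dot_square_norm)
    have "cross3 (w i) (cross3 (w i) (p j - q i)) = 0" using c0 by simp
    then have "(w i \<bullet> (p j - q i)) *\<^sub>R w i - (p j - q i) = 0" unfolding cross_cross ww by simp
    then have "p j = q i + (w i \<bullet> (p j - q i)) *\<^sub>R w i" by (simp add: algebra_simps)
    then have "p j \<in> line_through (q i) (w i)" unfolding line_through_def by blast
    moreover have "p j \<in> line_through a d" unfolding line_through_def p_def by blast
    ultimately have "p j \<in> {a + t i *\<^sub>R d}" using meets ij by blast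
    then have "(t j - t i) *\<^sub>R d = 0" unfolding p_def by (simp add: algebra_simps)
    then show False using dnz tinj[OF ij] by simp
  qed
  have fixp: "f i (p i) = p i" if "i \<in> {1..n}" for i
    unfolding f_def by (rule rot_fix_axis[OF onaxis[OF that]])
  have isom: "dist (f i x) (f i y) = dist x y" if "i \<in> {1..n}" for i x y
    unfolding f_def using unit that by (simp add: dist_rot)
  have rigid: "\<theta> i = 0" if "f i (p j) = p j" "i \<in> {1..n}" "j \<in> {1..n}" "i \<noteq> j" for i j
    using rot_fix_off_axis[of "w i" "q i" "\<theta> i" "p j"] that offaxis small unfolding f_def by blast
  have dp: "dist (p j) (p i) = (t j - t i) * norm d" if "t i \<le> t j" for i j
  proof -
    have "p j - p i = (t j - t i) *\<^sub>R d" unfolding p_def by (simp add: algebra_simps)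
    then show ?thesis using that by (simp add: dist_norm)
  qed
  have key: "\<forall>k. 1 \<le> k \<longrightarrow> k + 1 + m = n \<longrightarrow>
      dist (compR f (k+1) m (p n)) (p k) \<le> dist (p n) (p k) \<and>
      (dist (compR f (k+1) m (p n)) (p k) = dist (p n) (p k) \<longrightarrow>
         compR f (k+1) m (p n) = p n \<and> (\<forall>j. k < j \<and> j < n \<longrightarrow> \<theta> j = 0))" for m
  proof (induction m)
    case 0 then show ?case by auto
  next
    case (Suc m)
    show ?case
    proof (intro allI impI)
      fix k assume k1: "1 \<le> k" and km: "k + 1 + Suc m = n"
      define K where "K = k + 1"
      define Z' where "Z' = compR f (K+1) m (p n)"
      have Z: "compR f (k+1) (Suc m) (p n) = f K Z'" unfolding Z'_def K_def by simp
      have K1: "1 \<le> K" and Km: "K + 1 + m = n" using k1 km unfolding K_def by simp_all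
      have IH: "dist Z' (p K) \<le> dist (p n) (p K) \<and>
        (dist Z' (p K) = dist (p n) (p K) \<longrightarrow> Z' = p n \<and> (\<forall>j. K < j \<and> j < n \<longrightarrow> \<theta> j = 0))"
        using Suc.IH K1 Km unfolding Z'_def by blast
      have Kin: "K \<in> {1..n}" and kin: "k \<in> {1..n}" and nin: "n \<in> {1..n}" and Kn: "K < n"
        using Km k1 unfolding K_def by auto
      have tkK: "t k < t K" using inc kin Kin unfolding K_def by auto
      have tKn: "t K < t n" using inc Kin nin Kn by auto
      have dZK: "dist (f K Z') (p K) = dist Z' (p K)"
        using isom[OF Kin, of Z' "p K"] fixp[OF Kin] by simp
      have tri: "dist (f K Z') (p k) \<le> dist (f K Z') (p K) + dist (p K) (p k)"
        by (rule dist_triangle)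
      have sum: "dist (p n) (p k) = dist (p n) (p K) + dist (p K) (p k)"
        using dp[of K n] dp[of k K] dp[of k n] tkK tKn by (simp add: algebra_simps)
      have le: "dist (f K Z') (p k) \<le> dist (p n) (p k)"
        using tri dZK IH sum by linarith
      moreover have "f K Z' = p n \<and> (\<forall>j. k < j \<and> j < n \<longrightarrow> \<theta> j = 0)"
        if eq: "dist (f K Z') (p k) = dist (p n) (p k)"
      proof -
        have e1: "dist Z' (p K) = dist (p n) (p K)" using tri dZK IH sum eq by linarith
        then have Z'n: "Z' = p n" and thj: "\<forall>j. K < j \<and> j < n \<longrightarrow> \<theta> j = 0" using IH by auto
        have e2: "norm ((f K Z' - p K) + (p K - p k)) = norm (f K Z' - p K) + norm (p K - p k)"
          using tri dZK e1 sum eq by (simp add: dist_norm)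
        have y: "p K - p k = (t K - t k) *\<^sub>R d" unfolding p_def by (simp add: algebra_simps)
        have nx: "norm (f K Z' - p K) = (t n - t K) * norm d"
          using dZK e1 dp[of K n] tKn by (simp add: dist_norm)
        have ny: "norm (p K - p k) = (t K - t k) * norm d" unfolding y using tkK by simp
        have "norm (f K Z' - p K) *\<^sub>R (p K - p k) = norm (p K - p k) *\<^sub>R (f K Z' - p K)"
          using e2 norm_triangle_eq by blast
        then have "((t n - t K) * norm d * (t K - t k)) *\<^sub>R d = ((t K - t k) * norm d) *\<^sub>R (f K Z' - p K)"
          unfolding nx ny y using tkK by simp
        then have "((t K - t k) * norm d) *\<^sub>R ((t n - t K) *\<^sub>R d) = ((t K - t k) * norm d) *\<^sub>R (f K Z' - p K)"
          by (simp add: algebra_simps)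
        moreover have "(t K - t k) * norm d \<noteq> 0" using tkK dnz by simp
        ultimately have "(t n - t K) *\<^sub>R d = f K Z' - p K" using scaleR_cancel_left by blast
        then have fZ: "f K Z' = p n" unfolding p_def by (simp add: algebra_simps)
        then have "\<theta> K = 0" using rigid[OF _ Kin nin] Z'n Kn by simp
        then show ?thesis using fZ thj unfolding K_def
          by (metis Suc_eq_plus1 Suc_lessI)
      qed
      ultimately show "dist (compR f (k+1) (Suc m) (p n)) (p k) \<le> dist (p n) (p k) \<and>
        (dist (compR f (k+1) (Suc m) (p n)) (p k) = dist (p n) (p k) \<longrightarrow>
         compR f (k+1) (Suc m) (p n) = p n \<and> (\<forall>j. k < j \<and> j < n \<longrightarrow> \<theta> j = 0))"
        unfolding Z by blast
    qed
  qed
  have oin: "1 \<in> {1..n}" and nin: "n \<in> {1..n}" using n2 by auto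
  define Z1 where "Z1 = compR f 2 (n - 2) (p n)"
  have "compR f 1 n (p n) = compR f 1 (n - 1) (f n (p n))"
    using compR_snoc[of f 1 "n - 1" "p n"] n2 by simp
  also have "\<dots> = compR f 1 (n - 1) (p n)" using fixp[OF nin] by simp
  also have "\<dots> = f 1 Z1"
  proof -
    have "n - 1 = Suc (n - 2)" using n2 by simp
    then show ?thesis unfolding Z1_def by (simp add: numeral_2_eq_2)
  qed
  finally have fZ1: "f 1 Z1 = p n" using closes by simp
  have "dist Z1 (p 1) = dist (p n) (p 1)"
    using isom[OF oin, of Z1 "p 1"] fixp[OF oin] fZ1 by simp
  then have Z1n: "Z1 = p n" and mid: "\<forall>j. 1 < j \<and> j < n \<longrightarrow> \<theta> j = 0"
    using key[of "n - 2"] n2 unfolding Z1_def by (auto simp: numeral_2_eq_2)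
  have th1: "\<theta> 1 = 0" using rigid[OF _ oin nin] fZ1 Z1n n2 by simp
  have below: "\<theta> j = 0" if "1 \<le> j" "j < n" for j
    using th1 mid that by (cases "j = 1") auto
  have "compR f 1 n (p 1) = compR f 1 (n - 1) (f n (p 1))"
    using compR_snoc[of f 1 "n - 1" "p 1"] n2 by simp
  also have "\<dots> = f n (p 1)"
    by (rule compR_id) (use below in \<open>simp add: f_def rot_zero\<close>)
  finally have "f n (p 1) = p 1" using closes by simp
  then have thn: "\<theta> n = 0" using rigid[OF _ nin oin] n2 by simp
  show ?thesis
  proof
    fix i
    show "\<theta> i = 0"
    proof (cases "i \<in> {1..n}")
      case True then show ?thesis using below thn by (cases "i = n") auto
    next
      case False then show ?thesis using th by (simp add: config_space_def)
    qed
  qed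
qed


lemma line_through_neg: "line_through a (- d) = line_through a d"
proof -
  have "a + s *\<^sub>R (- d) = a + (- s) *\<^sub>R d" for s by simp
  then show ?thesis unfolding line_through_def by (metis (no_types, opaque_lifting) minus_minus scaleR_minus_left scaleR_minus_right)
qed

theorem mainTheorem2:
  fixes n :: nat and w q :: "nat \<Rightarrow> real^3"
    and a d :: "real^3" and t :: "nat \<Rightarrow> real"
  assumes n7: "n \<ge> 7"
    and unit_axes: "\<forall>i\<in>{1..n}. norm (w i) = 1"
    and d_nz: "d \<noteq> 0"
    and meets: "\<forall>i\<in>{1..n}. line_through (q i) (w i) \<inter> line_through a d = {a + t i *\<^sub>R d}"
    and monotone: "(\<forall>i\<in>{1..n}. \<forall>j\<in>{1..n}. i < j \<longrightarrow> t i < t j)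
                 \<or> (\<forall>i\<in>{1..n}. \<forall>j\<in>{1..n}. i < j \<longrightarrow> t i > t j)"
  shows "hypo_paradoxical n w q"
proof -
  have n2: "n \<ge> 2" using n7 by simp
  have "config_dim_zero_at_0 n w q"
    unfolding config_dim_zero_at_0_def
  proof (intro exI[of _ 1] conjI ballI impI)
    fix \<theta> assume th: "\<theta> \<in> config_space n w q" and sm: "\<forall>i\<in>{1..n}. \<bar>\<theta> i\<bar> < (1::real)"
    from monotone show "\<forall>i. \<theta> i = 0"
    proof
      assume inc: "\<forall>i\<in>{1..n}. \<forall>j\<in>{1..n}. i < j \<longrightarrow> t i < t j"
      show ?thesis by (rule main_inc[OF n2 unit_axes d_nz meets inc th sm])
    next
      assume dec: "\<forall>i\<in>{1..n}. \<forall>j\<in>{1..n}. i < j \<longrightarrow> t i > t j"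
      have dnz': "- d \<noteq> 0" using d_nz by simp
      have meets': "\<forall>i\<in>{1..n}. line_through (q i) (w i) \<inter> line_through a (- d) = {a + (- t i) *\<^sub>R (- d)}"
        using meets by (simp add: line_through_neg)
      have inc': "\<forall>i\<in>{1..n}. \<forall>j\<in>{1..n}. i < j \<longrightarrow> - t i < - t j" using dec by auto
      show ?thesis by (rule main_inc[OF n2 unit_axes dnz' meets' inc' th sm])
    qed
  qed simp
  moreover have "cgk_mobility n > 0" using n7 by (simp add: cgk_mobility_def)
  ultimately show ?thesis by (simp add: hypo_paradoxical_def)
qed

end
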